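(* If $G$ is a torsion abelian group containing elements $a$ and $b$ of distinct prime orders $p$ and $q$, then $\mathbb{P}(G)$ has exactly one element.
   Context: An abelian group is regarded as a $\mathbb{Z}$-module. For a $\mathbb{Z}$-module $M$ let $M^\circ=M\setminus\{0\}$; define $x\sim'y$ on $M^\circ$ if there exist $m\in M$ and $r,s\in\mathbb{Z}$ with $x=rm$, $y=sm$; let $\sim$ be the equivalence relation generated by $\sim'$; and let $\mathbb{P}(M)=M^\circ/\sim$. *)

theory Defs
  imports "HOL-Algebra.Algebra"
begin

text \<open>An abelian group is written multiplicatively as a HOL-Algebra comm_group;
  the Z-module action r m is the integer power m [^] r.\<close>

definition punctured :: "('a, 'b) monoid_scheme \<Rightarrow> 'a set" where
  "punctured G = carrier G - {\<one>\<^bsub>G\<^esub>}"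

definition sim_pre :: "('a, 'b) monoid_scheme \<Rightarrow> ('a \<times> 'a) set" where
  "sim_pre G = {(x, y). x \<in> punctured G \<and> y \<in> punctured G \<and>
      (\<exists>m \<in> carrier G. \<exists>(r::int) (s::int). x = m [^]\<^bsub>G\<^esub> r \<and> y = m [^]\<^bsub>G\<^esub> (s::int))}"

definition sim_rel :: "('a, 'b) monoid_scheme \<Rightarrow> ('a \<times> 'a) set" where
  "sim_rel G = Id_on (punctured G) \<union> (sim_pre G \<union> (sim_pre G)\<inverse>)\<^sup>+"

definition proj_space :: "('a, 'b) monoid_scheme \<Rightarrow> 'a set set" where
  "proj_space G = punctured G // sim_rel G"

end

theory Submission
  imports Defs
begin

lemma (in comm_group) coprime_powers:
  assumes u: "u \<in> carrier G" and v: "v \<in> carrier G"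
    and cp: "coprime (ord u) (ord v)"
  shows "\<exists>(i::int) (j::int). (u \<otimes> v) [^] i = u \<and> (u \<otimes> v) [^] j = v"
proof -
  have "coprime (int (ord u)) (int (ord v))" using cp by simp
  hence "gcd (int (ord u)) (int (ord v)) = 1"
    by (simp only: coprime_iff_gcd_eq_1)
  then obtain i j :: int where ij: "i * int (ord u) + j * int (ord v) = 1"
    using bezout_int by metis
  have vj: "v [^] (j * int (ord v)) = \<one>"
    using int_pow_eq_id[OF v, of "j * int (ord v)"] by simp
  have ui: "u [^] (i * int (ord u)) = \<one>"
    using int_pow_eq_id[OF u, of "i * int (ord u)"] by simp
  have d1: "int (ord u) dvd (1 - j * int (ord v))"
  proof -
    have "1 - j * int (ord v) = i * int (ord u)" using ij by linarith
    thus ?thesis by simp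
  qed
  have d2: "int (ord v) dvd (1 - i * int (ord u))"
  proof -
    have "1 - i * int (ord u) = j * int (ord v)" using ij by linarith
    thus ?thesis by simp
  qed
  have uj: "u [^] (j * int (ord v)) = u"
  proof -
    have "u [^] (j * int (ord v)) = u [^] (1::int)"
      using int_pow_eq[OF u, of "j * int (ord v)" 1] d1 by blast
    thus ?thesis using int_pow_1[OF u] by simp
  qed
  have vi: "v [^] (i * int (ord u)) = v"
  proof -
    have "v [^] (i * int (ord u)) = v [^] (1::int)"
      using int_pow_eq[OF v, of "i * int (ord u)" 1] d2 by blast
    thus ?thesis using int_pow_1[OF v] by simp
  qed
  have "(u \<otimes> v) [^] (j * int (ord v)) = u \<otimes> \<one>"
    using int_pow_distrib[OF u v, of "j * int (ord v)"] uj vj by simp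
  hence 1: "(u \<otimes> v) [^] (j * int (ord v)) = u" using u by simp
  have "(u \<otimes> v) [^] (i * int (ord u)) = \<one> \<otimes> v"
    using int_pow_distrib[OF u v, of "i * int (ord u)"] ui vi by simp
  hence 2: "(u \<otimes> v) [^] (i * int (ord u)) = v" using v by simp
  from 1 2 show ?thesis by blast
qed

lemma sim_preI:
  assumes "x \<in> punctured G" "y \<in> punctured G" "m \<in> carrier G"
    "x = m [^]\<^bsub>G\<^esub> (r::int)" "y = m [^]\<^bsub>G\<^esub> (s::int)"
  shows "(x, y) \<in> sim_pre G"
  unfolding sim_pre_def using assms by blast

lemma sim_pre_coprime:
  assumes G: "comm_group G" and u: "u \<in> punctured G" and v: "v \<in> punctured G"
    and cp: "coprime (group.ord G u) (group.ord G v)"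
  shows "(u, v) \<in> sim_pre G"
proof -
  interpret comm_group G by (rule G)
  have uc: "u \<in> carrier G" and vc: "v \<in> carrier G" using u v by (auto simp: punctured_def)
  obtain i j :: int where "(u \<otimes>\<^bsub>G\<^esub> v) [^]\<^bsub>G\<^esub> i = u" "(u \<otimes>\<^bsub>G\<^esub> v) [^]\<^bsub>G\<^esub> j = v"
    using coprime_powers[OF uc vc cp] by blast
  moreover have "u \<otimes>\<^bsub>G\<^esub> v \<in> carrier G" using uc vc by simp
  ultimately show ?thesis using sim_preI[OF u v] by metis
qed

theorem theorem4p10:
  fixes G :: "('a, 'b) monoid_scheme" and a b :: 'a and p q :: nat
  assumes "comm_group G"
    and "\<forall>x \<in> carrier G. \<exists>n::nat. n > 0 \<and> x [^]\<^bsub>G\<^esub> n = \<one>\<^bsub>G\<^esub>"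
    and "a \<in> carrier G" and "b \<in> carrier G"
    and "Factorial_Ring.prime p" and "Factorial_Ring.prime q" and "p \<noteq> q"
    and "group.ord G a = p" and "group.ord G b = q"
  shows "card (proj_space G) = 1"
proof -
  interpret comm_group G by (rule assms(1))
  note G = assms(1)
  let ?P = "punctured G" and ?S = "sim_pre G \<union> (sim_pre G)\<inverse>"
  let ?R = "sim_rel G"
  have Ssub: "?S \<subseteq> ?P \<times> ?P" unfolding sim_pre_def by auto
  have Stsub: "?S\<^sup>+ \<subseteq> ?P \<times> ?P" using Ssub by (rule trancl_subset_Sigma)
  have Rsub: "?R \<subseteq> ?P \<times> ?P" unfolding sim_rel_def using Stsub by (blast elim: Id_onE)
  have eq: "equiv ?P ?R"
  proof (rule equivI)
    show "?R \<subseteq> ?P \<times> ?P" by (rule Rsub)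
    show "refl_on ?P ?R" using Rsub unfolding refl_on_def by (auto simp: sim_rel_def)
    have "sym ?S" unfolding sym_def by auto
    hence "sym (?S\<^sup>+)" by (rule sym_trancl)
    thus "sym ?R" unfolding sim_rel_def sym_def by auto
    show "trans ?R"
    proof (rule transI)
      fix x y z assume "(x, y) \<in> ?R" "(y, z) \<in> ?R"
      thus "(x, z) \<in> ?R" unfolding sim_rel_def
        by (elim UnE) (blast elim: Id_onE intro: trancl_trans)+
    qed
  qed
  have trR: "trans ?R" using eq by (simp add: equiv_def)
  have pa: "a \<in> ?P" using assms(3,5,8) ord_eq_1[of a] by (auto simp: punctured_def)
  have pb: "b \<in> ?P" using assms(4,6,9) ord_eq_1[of b] by (auto simp: punctured_def)
  have inR: "(x, y) \<in> sim_pre G \<Longrightarrow> (x, y) \<in> ?R" for x y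
    unfolding sim_rel_def by auto
  have ba: "(b, a) \<in> ?R"
    using sim_pre_coprime[OF G pb pa] assms by (simp add: primes_coprime inR)
  have prime_to_a: "(y, a) \<in> ?R" if y: "y \<in> ?P" and r: "Factorial_Ring.prime (ord y)" for y
  proof (cases "ord y = p")
    case False
    hence "coprime (ord y) (ord a)" using r assms by (simp add: primes_coprime)
    thus ?thesis using sim_pre_coprime[OF G y pa] inR by blast
  next
    case True
    hence "coprime (ord y) (ord b)" using r assms by (simp add: primes_coprime)
    hence "(y, b) \<in> ?R" using sim_pre_coprime[OF G y pb] inR by blast
    thus ?thesis using ba by (rule transD[OF trR])
  qed
  have all: "(x, a) \<in> ?R" if x: "x \<in> ?P" for x
  proof -
    have xc: "x \<in> carrier G" and x1: "x \<noteq> \<one>\<^bsub>G\<^esub>" using x by (auto simp: punctured_def)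
    obtain n :: nat where "n > 0" "x [^]\<^bsub>G\<^esub> n = \<one>\<^bsub>G\<^esub>" using assms(2) xc by blast
    hence n0: "ord x \<noteq> 0" using ord_eq_0[OF xc] by auto
    have n1: "ord x \<noteq> 1" using ord_eq_1[OF xc] x1 by simp
    obtain r where r: "Factorial_Ring.prime r" "r dvd ord x"
      using prime_factor_nat[OF n1] by blast
    define k where "k = ord x div r"
    have rk: "ord x = r * k" unfolding k_def using r(2) by simp
    have k0: "k \<noteq> 0" using rk n0 by auto
    have kd: "k dvd ord x" using rk by simp
    have ordy: "ord (x [^]\<^bsub>G\<^esub> k) = r" using ord_pow[OF xc kd k0] rk k0 by simp
    have yc: "x [^]\<^bsub>G\<^esub> k \<in> carrier G" using xc by simp
    have y1: "x [^]\<^bsub>G\<^esub> k \<noteq> \<one>\<^bsub>G\<^esub>" using ordy r ord_eq_1[OF yc] by auto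
    have yP: "x [^]\<^bsub>G\<^esub> k \<in> ?P" using yc y1 by (simp add: punctured_def)
    have "(x, x [^]\<^bsub>G\<^esub> k) \<in> sim_pre G"
    proof -
      have e1: "x = x [^]\<^bsub>G\<^esub> (1::int)" using int_pow_1[OF xc] by simp
      have e2: "x [^]\<^bsub>G\<^esub> k = x [^]\<^bsub>G\<^esub> (int k)" by (simp add: int_pow_int)
      show ?thesis by (rule sim_preI[OF x yP xc e1 e2])
    qed
    hence "(x, x [^]\<^bsub>G\<^esub> k) \<in> ?R" by (rule inR)
    moreover have "(x [^]\<^bsub>G\<^esub> k, a) \<in> ?R" using prime_to_a[OF yP] ordy r by simp
    ultimately show ?thesis by (rule transD[OF trR])
  qed
  have "proj_space G = {?R `` {a}}"
  proof -
    have "?R `` {x} = ?R `` {a}" if "x \<in> ?P" for x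
      using equiv_class_eq[OF eq all[OF that]] .
    hence "\<forall>x\<in>?P. {?R `` {x}} = {?R `` {a}}" by simp
    hence "(\<Union>x\<in>?P. {?R `` {x}}) = (\<Union>x\<in>?P. {?R `` {a}})" by (intro SUP_cong refl) blast
    also have "\<dots> = {?R `` {a}}" using pa by blast
    finally show ?thesis unfolding proj_space_def quotient_def .
  qed
  thus ?thesis by simp
qed

end
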